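(* Let $H\in\mathbb{C}^{n\times n}$ be PT-symmetric, i.e. there exists a matrix $P\in\mathbb{C}^{n\times n}$ with $P^{2}=I$ such that $P\bar{H}=HP$, where $\bar{H}$ is the entrywise complex conjugate of $H$. Then $H$ is pseudo-Hermitian, i.e. there exist a non-singular Hermitian matrix $G\in\mathbb{C}^{n\times n}$ and a Hermitian matrix $S\in\mathbb{C}^{n\times n}$ such that $H=-G^{-1}S$. This holds regardless of whether $H$ is diagonalizable.
   Context: Here $P$ is a (complex-linear) matrix representing a parity operator and $T$ is complex conjugation; the condition $PTH=HPT$ is equivalent to $P\bar{H}-HP=0$. Equivalently, with $A=-iH$, pseudo-Hermiticity of $H$ means $A=iG^{-1}S$ for some non-singular Hermitian $G$ and Hermitian $S$. *)

theory Defs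
  imports "HOL-Analysis.Analysis"
begin

definition mat_cnj :: "complex^'n^'m \<Rightarrow> complex^'n^'m" where
  "mat_cnj A = (\<chi> i j. cnj (A $ i $ j))"

definition mat_adjoint :: "complex^'n^'m \<Rightarrow> complex^'m^'n" where
  "mat_adjoint A = transpose (mat_cnj A)"

definition hermitian :: "complex^'n^'n \<Rightarrow> bool" where
  "hermitian A \<longleftrightarrow> mat_adjoint A = A"

end

theory Submission imports Defs "Jordan_Normal_Form.Jordan_Normal_Form_Existence" begin

definition revm :: "nat \<Rightarrow> complex mat" where
  "revm n = Matrix.mat n n (\<lambda>(i,j). if j = n - 1 - i then 1 else 0)"

lemma revm_carrier[simp]: "revm n \<in> carrier_mat n n"
  unfolding revm_def by auto

lemma revm_dim[simp]: "dim_row (revm n) = n" "dim_col (revm n) = n"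
  unfolding revm_def by auto

lemma revm_left:
  assumes B: "B \<in> carrier_mat n m" and i: "i < n" and j: "j < m"
  shows "(revm n * B) $$ (i,j) = B $$ (n-1-i, j)"
proof -
  have "(revm n * B) $$ (i,j) = (\<Sum>k\<in>{0..<n}. (if k = n - 1 - i then 1 else 0) * B $$ (k,j))"
    using B i j by (simp add: revm_def scalar_prod_def)
  also have "\<dots> = (\<Sum>k\<in>{0..<n}. (if k = n - 1 - i then B $$ (k,j) else 0))"
    by (rule sum.cong, auto)
  also have "\<dots> = B $$ (n-1-i, j)"
    using i by simp
  finally show ?thesis .
qed

lemma revm_right:
  assumes B: "B \<in> carrier_mat m n" and i: "i < m" and j: "j < n"
  shows "(B * revm n) $$ (i,j) = B $$ (i, n-1-j)"
proof -
  have "(B * revm n) $$ (i,j) = (\<Sum>k\<in>{0..<n}. B $$ (i,k) * (if j = n - 1 - k then 1 else 0))"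
    using B i j by (simp add: revm_def scalar_prod_def)
  also have "\<dots> = (\<Sum>k\<in>{0..<n}. (if k = n - 1 - j then B $$ (i,k) else 0))"
    using j by (intro sum.cong, auto)
  also have "\<dots> = B $$ (i, n-1-j)"
    using j by simp
  finally show ?thesis .
qed

lemma revm_sq: "revm n * revm n = 1\<^sub>m n"
proof (rule eq_matI)
  fix i j assume "i < dim_row (1\<^sub>m n)" "j < dim_col (1\<^sub>m n)"
  hence ij: "i < n" "j < n" by auto
  show "(revm n * revm n) $$ (i,j) = 1\<^sub>m n $$ (i,j)"
    using ij by (subst revm_left[of _ n n], auto simp: revm_def)
qed auto

lemma jordan_block_transpose_sim:
  "similar_mat (transpose_mat (jordan_block n (a::complex))) (jordan_block n a)"
proof -
  have "transpose_mat (jordan_block n a) = revm n * jordan_block n a * revm n"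
  proof (rule eq_matI)
    fix i j assume "i < dim_row (revm n * jordan_block n a * revm n)" "j < dim_col (revm n * jordan_block n a * revm n)"
    hence ij: "i < n" "j < n" by auto
    have "(revm n * jordan_block n a * revm n) $$ (i,j) = (revm n * jordan_block n a) $$ (i, n-1-j)"
      using ij by (intro revm_right[where m=n], auto)
    also have "\<dots> = jordan_block n a $$ (n-1-i, n-1-j)"
      using ij by (intro revm_left[where m=n], auto)
    finally show "transpose_mat (jordan_block n a) $$ (i,j) = (revm n * jordan_block n a * revm n) $$ (i,j)"
      using ij by auto
  qed auto
  thus ?thesis
    by (intro similar_matI[of _ _ "revm n" "revm n" n], auto simp: revm_sq)
qed

lemma transpose_diag_block_mat:
  "transpose_mat (diag_block_mat As) = diag_block_mat (map transpose_mat (As :: 'a::zero mat list))"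
proof (induct As)
  case Nil then show ?case by auto
next
  case (Cons A As)
  let ?B = "diag_block_mat As"
  have "transpose_mat (diag_block_mat (A # As)) =
    four_block_mat (transpose_mat A) (transpose_mat (0\<^sub>m (dim_row ?B) (dim_col A)))
      (transpose_mat (0\<^sub>m (dim_row A) (dim_col ?B))) (transpose_mat ?B)"
    unfolding diag_block_mat.simps Let_def
    by (rule transpose_four_block_mat, auto)
  also have "\<dots> = diag_block_mat (map transpose_mat (A # As))"
    using Cons by (simp add: Let_def dim_diag_block_mat o_def)
  finally show ?case .
qed

lemma similar_mat_transpose:
  assumes "similar_mat A (B :: 'a::comm_ring_1 mat)"
  shows "similar_mat (transpose_mat A) (transpose_mat B)"
proof -
  from similar_matD[OF assms] obtain n P Q where
    c: "{A,B,P,Q} \<subseteq> carrier_mat n n" and PQ: "P * Q = 1\<^sub>m n" "Q * P = 1\<^sub>m n"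
    and A: "A = P * B * Q" by blast
  have "transpose_mat A = transpose_mat Q * transpose_mat B * transpose_mat P"
  proof -
    have cc: "P \<in> carrier_mat n n" "B \<in> carrier_mat n n" "Q \<in> carrier_mat n n" using c by auto
    have "transpose_mat A = transpose_mat Q * transpose_mat (P * B)"
      unfolding A by (rule transpose_mult[of _ n n], insert cc, auto)
    also have "transpose_mat (P * B) = transpose_mat B * transpose_mat P"
      by (rule transpose_mult[of _ n n], insert cc, auto)
    finally show ?thesis using cc
      by (simp add: assoc_mult_mat[of _ n n _ n _ n])
  qed
  moreover have "transpose_mat Q * transpose_mat P = 1\<^sub>m n"
    using c PQ by (metis insert_subset transpose_mult transpose_one)
  moreover have "transpose_mat P * transpose_mat Q = 1\<^sub>m n"
    using c PQ by (metis insert_subset transpose_mult transpose_one)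
  ultimately show ?thesis using c
    by (intro similar_matI[of _ _ "transpose_mat Q" "transpose_mat P" n], auto)
qed

lemma complex_similar_transpose:
  assumes A: "(A :: complex mat) \<in> carrier_mat n n"
  shows "similar_mat (transpose_mat A) A"
proof -
  from char_poly_factorized[OF A] obtain as where "char_poly A = (\<Prod>a\<leftarrow>as. [:- a, 1:])" by auto
  from jordan_nf_exists[OF A this] obtain n_as where "jordan_nf A n_as" ..
  hence sim: "similar_mat A (jordan_matrix n_as)" unfolding jordan_nf_def by auto
  let ?Ms = "map (\<lambda>(n,a). (transpose_mat (jordan_block n a), jordan_block n a)) n_as"
  have "similar_mat (diag_block_mat (map fst ?Ms)) (diag_block_mat (map snd ?Ms))"
    by (rule similar_diag_mat_block_mat, auto simp: jordan_block_transpose_sim)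
  moreover have "transpose_mat (jordan_matrix n_as) = diag_block_mat (map fst ?Ms)"
    by (simp add: jordan_matrix_def transpose_diag_block_mat map_map o_def case_prod_beta)
  moreover have "jordan_matrix n_as = diag_block_mat (map snd ?Ms)"
    unfolding jordan_matrix_def map_map o_def by (simp add: case_prod_beta')
  ultimately have "similar_mat (transpose_mat (jordan_matrix n_as)) (jordan_matrix n_as)"
    by simp
  with similar_mat_transpose[OF sim] sim show ?thesis
    using similar_mat_trans similar_mat_sym by blast
qed

hide_const (open) Matrix.mat Determinant.det

definition idx :: "'n::finite \<Rightarrow> nat" where
  "idx = (SOME h. bij_betw h (UNIV::'n set) {0..<CARD('n)})"

lemma idx_bij: "bij_betw (idx :: 'n::finite \<Rightarrow> nat) UNIV {0..<CARD('n)}"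
proof -
  have "\<exists>h. bij_betw h (UNIV::'n set) {0..<CARD('n)}"
    by (rule ex_bij_betw_finite_nat) simp
  thus ?thesis unfolding idx_def by (rule someI_ex)
qed

lemma idx_lt[simp]: "idx (i::'n::finite) < CARD('n)"
  using idx_bij[where 'n='n] by (auto simp: bij_betw_def)

lemma idx_inj[simp]: "(idx (i::'n::finite) = idx j) = (i = j)"
  using idx_bij[where 'n='n] by (auto simp: bij_betw_def inj_on_def)

definition from_mat :: "complex mat \<Rightarrow> complex^'n::finite^'n" where
  "from_mat M = (\<chi> i j. M $$ (idx i, idx j))"

definition to_mat :: "complex^'n::finite^'n \<Rightarrow> complex mat" where
  "to_mat A = Matrix.mat CARD('n) CARD('n)
     (\<lambda>(i,j). A $ (inv_into UNIV idx i) $ (inv_into UNIV idx j))"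

lemma to_mat_carrier: "to_mat (A :: complex^'n::finite^'n) \<in> carrier_mat CARD('n) CARD('n)"
  unfolding to_mat_def by auto

lemma from_to: "from_mat (to_mat A) = (A :: complex^'n::finite^'n)"
proof -
  have inj: "inj (idx :: 'n \<Rightarrow> nat)" using idx_bij[where 'n='n] by (auto simp: bij_betw_def)
  show ?thesis
    unfolding from_mat_def to_mat_def by (simp add: Finite_Cartesian_Product.vec_eq_iff inv_into_f_f[OF inj])
qed

lemma from_mult:
  assumes X: "X \<in> carrier_mat CARD('n) CARD('n)" and Y: "Y \<in> carrier_mat CARD('n) CARD('n)"
  shows "(from_mat (X * Y) :: complex^'n::finite^'n) = from_mat X ** from_mat Y"
proof -
  have "(X * Y) $$ (idx i, idx j) = (\<Sum>k\<in>(UNIV::'n set). X $$ (idx i, idx k) * Y $$ (idx k, idx j))"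
    for i j :: 'n
  proof -
    have "(X * Y) $$ (idx i, idx j) = (\<Sum>k\<in>{0..<CARD('n)}. X $$ (idx i, k) * Y $$ (k, idx j))"
      using X Y by (simp add: scalar_prod_def)
    also have "\<dots> = (\<Sum>k\<in>(UNIV::'n set). X $$ (idx i, idx k) * Y $$ (idx k, idx j))"
      by (rule sum.reindex_bij_betw[OF idx_bij, symmetric])
    finally show ?thesis .
  qed
  thus ?thesis
    unfolding from_mat_def matrix_matrix_mult_def by (simp add: Finite_Cartesian_Product.vec_eq_iff)
qed

lemma from_transpose:
  assumes X: "X \<in> carrier_mat CARD('n) CARD('n)"
  shows "(from_mat (transpose_mat X) :: complex^'n::finite^'n) = transpose (from_mat X)"
  using X unfolding from_mat_def transpose_def by (simp add: Finite_Cartesian_Product.vec_eq_iff)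

lemma from_one: "(from_mat (1\<^sub>m CARD('n)) :: complex^'n::finite^'n) = mat 1"
  unfolding from_mat_def Finite_Cartesian_Product.mat_def by (simp add: Finite_Cartesian_Product.vec_eq_iff)

lemma sim_transpose_vec:
  fixes A :: "complex^'n::finite^'n"
  shows "\<exists>Q. invertible Q \<and> A ** Q = Q ** transpose A"
proof -
  let ?n = "CARD('n)"
  have c: "to_mat A \<in> carrier_mat ?n ?n" by (rule to_mat_carrier)
  from similar_matD[OF complex_similar_transpose[OF c]] obtain m P Q where
    cc: "{transpose_mat (to_mat A), to_mat A, P, Q} \<subseteq> carrier_mat m m"
    and PQ: "P * Q = 1\<^sub>m m" "Q * P = 1\<^sub>m m"
    and eq: "transpose_mat (to_mat A) = P * to_mat A * Q" by blast
  have m: "m = ?n" using cc c by auto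
  have P: "P \<in> carrier_mat ?n ?n" and Q: "Q \<in> carrier_mat ?n ?n" using cc m by auto
  define P' :: "complex^'n^'n" where "P' = from_mat P"
  define Q' :: "complex^'n^'n" where "Q' = from_mat Q"
  have PQ': "P' ** Q' = mat 1" "Q' ** P' = mat 1"
    unfolding P'_def Q'_def using PQ m P Q by (simp_all add: from_mult[symmetric] from_one)
  have "transpose A = from_mat (transpose_mat (to_mat A))"
    by (simp add: from_transpose[OF c] from_to)
  also have "\<dots> = P' ** A ** Q'"
  proof -
    have "from_mat (P * to_mat A * Q) = from_mat (P * to_mat A) ** (from_mat Q :: complex^'n^'n)"
      by (rule from_mult) (use P c Q in auto)
    also have "from_mat (P * to_mat A) = from_mat P ** (from_mat (to_mat A) :: complex^'n^'n)"
      by (rule from_mult) (use P c in auto)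
    finally show ?thesis unfolding eq P'_def Q'_def from_to .
  qed
  finally have tA: "transpose A = P' ** A ** Q'" .
  have "Q' ** transpose A = (Q' ** P') ** A ** Q'"
    unfolding tA by (simp add: matrix_mul_assoc)
  also have "\<dots> = A ** Q'" using PQ' by simp
  finally have "A ** Q' = Q' ** transpose A" by simp
  moreover have "invertible Q'" unfolding invertible_def using PQ' by blast
  ultimately show ?thesis by blast
qed

hide_const (open) Schur_Decomposition.mat_adjoint
no_notation Matrix.vec_index (infixl \<open>$\<close> 100)

lemma mat_adjoint_nth[simp]: "mat_adjoint A $ i $ j = cnj (A $ j $ i)"
  unfolding Defs.mat_adjoint_def mat_cnj_def transpose_def by simp

lemma mat_cnj_mult: "mat_cnj (A ** B) = mat_cnj A ** mat_cnj B"
  unfolding mat_cnj_def matrix_matrix_mult_def by (simp add: Finite_Cartesian_Product.vec_eq_iff)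

lemma mat_adjoint_mult: "mat_adjoint (A ** (B :: complex^'n::finite^'n)) = mat_adjoint B ** mat_adjoint A"
  unfolding Defs.mat_adjoint_def mat_cnj_mult matrix_transpose_mul ..

lemma mat_adjoint_neg: "mat_adjoint (- A) = - mat_adjoint (A :: complex^'n::finite^'n)"
  by (simp add: Finite_Cartesian_Product.vec_eq_iff)

lemma matrix_mul_neg_right: "A ** (- B) = - (A ** (B :: complex^'n::finite^'n))"
  unfolding matrix_matrix_mult_def by (simp add: Finite_Cartesian_Product.vec_eq_iff sum_negf)

lemma matrix_inv_props:
  assumes "invertible (A :: complex^'n::finite^'n)"
  shows "A ** matrix_inv A = mat 1" "matrix_inv A ** A = mat 1"
proof -
  have "\<exists>A'. A ** A' = mat 1 \<and> A' ** A = mat 1" using assms unfolding invertible_def by blast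
  hence "A ** matrix_inv A = mat 1 \<and> matrix_inv A ** A = mat 1"
    unfolding matrix_inv_def by (rule someI_ex)
  thus "A ** matrix_inv A = mat 1" "matrix_inv A ** A = mat 1" by auto
qed

lemma lin_comb_intertwine:
  fixes X Y H K :: "complex^'n::finite^'n"
  assumes "X ** H = K ** X" "Y ** H = K ** Y"
  shows "(\<chi> i j. a * X$i$j + b * Y$i$j) ** H = K ** (\<chi> i j. a * X$i$j + b * Y$i$j)"
proof -
  have x: "(\<Sum>k\<in>UNIV. X$i$k * H$k$j) = (\<Sum>k\<in>UNIV. K$i$k * X$k$j)" for i j
    using arg_cong[OF assms(1), of "\<lambda>M. M$i$j"] unfolding matrix_matrix_mult_def by simp
  have y: "(\<Sum>k\<in>UNIV. Y$i$k * H$k$j) = (\<Sum>k\<in>UNIV. K$i$k * Y$k$j)" for i j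
    using arg_cong[OF assms(2), of "\<lambda>M. M$i$j"] unfolding matrix_matrix_mult_def by simp
  have "(\<Sum>k\<in>UNIV. (a * X$i$k + b * Y$i$k) * H$k$j) = (\<Sum>k\<in>UNIV. K$i$k * (a * X$k$j + b * Y$k$j))" for i j
  proof -
    have "(\<Sum>k\<in>UNIV. (a * X$i$k + b * Y$i$k) * H$k$j)
        = a * (\<Sum>k\<in>UNIV. X$i$k * H$k$j) + b * (\<Sum>k\<in>UNIV. Y$i$k * H$k$j)"
      by (simp add: sum.distrib sum_distrib_left algebra_simps)
    also have "\<dots> = a * (\<Sum>k\<in>UNIV. K$i$k * X$k$j) + b * (\<Sum>k\<in>UNIV. K$i$k * Y$k$j)"
      by (simp add: x y)
    also have "\<dots> = (\<Sum>k\<in>UNIV. K$i$k * (a * X$k$j + b * Y$k$j))"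
      by (simp add: sum.distrib sum_distrib_left algebra_simps)
    finally show ?thesis .
  qed
  thus ?thesis unfolding matrix_matrix_mult_def by (simp add: Finite_Cartesian_Product.vec_eq_iff)
qed

lemma det_poly:
  fixes e :: "'n::finite \<Rightarrow> 'n \<Rightarrow> complex poly"
  shows "det (\<chi> i j. poly (e i j) t) =
    poly (\<Sum>p\<in>{p. p permutes (UNIV::'n set)}. Polynomial.smult (of_int (sign p)) (\<Prod>i\<in>UNIV. e i (p i))) t"
  unfolding Determinants.det_def by (simp add: poly_sum poly_prod)

lemma exists_real_nonroot:
  fixes q :: "complex poly"
  assumes "q \<noteq> 0"
  shows "\<exists>r::real. poly q (of_real r) \<noteq> 0"
proof (rule ccontr)
  assume "\<not> ?thesis"
  hence "range (of_real :: real \<Rightarrow> complex) \<subseteq> {x. poly q x = 0}" by auto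
  hence "finite (range (of_real :: real \<Rightarrow> complex))"
    using poly_roots_finite[OF assms] finite_subset by blast
  moreover have "inj (of_real :: real \<Rightarrow> complex)" by (simp add: inj_on_def)
  ultimately have "finite (UNIV :: real set)" using finite_imageD by blast
  thus False by (simp add: infinite_UNIV_char_0)
qed

theorem corollary1:
  fixes H P :: "complex^'n^'n"
  assumes "P ** P = mat 1"
    and "P ** mat_cnj H = H ** P"
  shows "\<exists>G S :: complex^'n^'n. invertible G \<and> hermitian G \<and> hermitian S
           \<and> H = - (matrix_inv G ** S)"
proof -
  let ?K = "mat_adjoint H"
  have cH: "mat_cnj H = P ** H ** P"
  proof -
    have "P ** (P ** mat_cnj H) = P ** (H ** P)" using assms(2) by simp
    thus ?thesis using assms(1) by (simp add: matrix_mul_assoc)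
  qed
  define Pt where "Pt = transpose P"
  have PtPt: "Pt ** Pt = mat 1"
    unfolding Pt_def using assms(1) by (metis matrix_transpose_mul transpose_mat)
  have K: "?K = Pt ** transpose H ** Pt"
    unfolding Defs.mat_adjoint_def cH Pt_def by (simp add: matrix_transpose_mul matrix_mul_assoc)
  obtain Q where Q: "invertible Q" "H ** Q = Q ** transpose H"
    using sim_transpose_vec by blast
  define Qi where "Qi = matrix_inv Q"
  have QQi: "Q ** Qi = mat 1" "Qi ** Q = mat 1"
    using matrix_inv_props[OF Q(1)] unfolding Qi_def by auto
  have Ht: "transpose H = Qi ** H ** Q"
  proof -
    have "Qi ** (H ** Q) = Qi ** (Q ** transpose H)" using Q(2) by simp
    thus ?thesis using QQi by (simp add: matrix_mul_assoc)
  qed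
  define X where "X = Pt ** Qi"
  have XH: "X ** H = ?K ** X"
  proof -
    have "?K ** X = Pt ** transpose H ** (Pt ** Pt) ** Qi"
      unfolding K X_def by (simp add: matrix_mul_assoc)
    also have "\<dots> = Pt ** Qi ** H ** (Q ** Qi)"
      unfolding PtPt Ht by (simp add: matrix_mul_assoc)
    also have "\<dots> = X ** H" unfolding QQi X_def by simp
    finally show ?thesis by simp
  qed
  have detX: "det X \<noteq> 0"
  proof -
    have "det Pt * det Pt = 1" using PtPt by (metis det_I det_mul)
    hence "det Pt \<noteq> 0" by auto
    moreover have "det Q * det Qi = 1" using QQi by (metis det_I det_mul)
    hence "det Qi \<noteq> 0" by auto
    ultimately show ?thesis unfolding X_def by (simp add: det_mul)
  qed
  define Y where "Y = mat_adjoint X"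
  have YH: "Y ** H = ?K ** Y"
  proof -
    have "mat_adjoint (X ** H) = mat_adjoint (?K ** X)" using XH by simp
    hence "?K ** Y = Y ** mat_adjoint ?K" unfolding Y_def mat_adjoint_mult by simp
    moreover have "mat_adjoint ?K = H" by (simp add: Finite_Cartesian_Product.vec_eq_iff)
    ultimately show ?thesis by simp
  qed
  define e where "e = (\<lambda>i j. [: (X$i$j + Y$i$j) / 2, (X$i$j - Y$i$j) / (2 * \<i>) :])"
  define q where "q = (\<Sum>p\<in>{p. p permutes (UNIV::'n set)}. Polynomial.smult (of_int (sign p)) (\<Prod>i\<in>UNIV. e i (p i)))"
  have ev: "poly (e i j) t = (1/2 + t / (2*\<i>)) * X$i$j + (1/2 - t / (2*\<i>)) * Y$i$j" for i j t
    unfolding e_def by (simp add: field_simps)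
  define G where "G = (\<lambda>t. (\<chi> i j. (1/2 + t / (2*\<i>)) * X$i$j + (1/2 - t / (2*\<i>)) * Y$i$j) :: complex^'n^'n)"
  have detG: "det (G t) = poly q t" for t
    unfolding q_def det_poly[symmetric] G_def ev ..
  have "G \<i> = X" unfolding G_def by (simp add: Finite_Cartesian_Product.vec_eq_iff)
  hence "poly q \<i> \<noteq> 0" using detX detG by metis
  hence "q \<noteq> 0" by auto
  then obtain r :: real where r: "poly q (of_real r) \<noteq> 0" using exists_real_nonroot by blast
  define G0 where "G0 = G (of_real r)"
  have invG: "invertible G0" unfolding G0_def invertible_det_nz detG using r .
  have hermG: "hermitian G0"
    unfolding hermitian_def G0_def G_def Y_def
    by (simp add: Finite_Cartesian_Product.vec_eq_iff field_simps)
  have GH: "G0 ** H = ?K ** G0"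
    unfolding G0_def G_def by (rule lin_comb_intertwine[OF XH YH])
  define S where "S = - (G0 ** H)"
  have hermS: "hermitian S"
  proof -
    have "mat_adjoint S = - (?K ** mat_adjoint G0)"
      unfolding S_def mat_adjoint_neg mat_adjoint_mult ..
    also have "mat_adjoint G0 = G0" using hermG unfolding hermitian_def .
    finally show ?thesis unfolding hermitian_def S_def GH by simp
  qed
  have "- (matrix_inv G0 ** S) = (matrix_inv G0 ** G0) ** H"
    unfolding S_def matrix_mul_neg_right by (simp add: matrix_mul_assoc)
  also have "\<dots> = H" using matrix_inv_props[OF invG] by simp
  finally show ?thesis using invG hermG hermS by metis
qed

end
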